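(* Let $S\subseteq X$, $\psi:S\to Z$ be $C$-convex, $x_0\in S$ and $f=\psi^C$. Then the following three conditions on $x_0$ are equivalent: (i) $f(x_0)=Z$, or for all $x\in\operatorname{dom}f$ with $f(x)\ne f(x_0)$: $0\notin f'(x_0,x-x_0)$; (ii) $f(x_0)=Z$, or for all $x\in\operatorname{dom} f$ with $f(x)\ne f(x_0)$ there is $z^*\in C^-\setminus\{0\}$ with $0<\varphi'_{f,z^*}(x_0,x-x_0)$; (iii) for all $x\in\operatorname{dom}f$ with $f(x_0)\ne f(x)$ there is $z^*\in C^-\setminus\{0\}$ with $-\infty=\varphi_{f,z^*}(x_0)<\varphi_{f,z^*}(x)$ or $0<\varphi'_{f,z^*}(x_0,x-x_0)$. In particular, if for every $x\in S$ with $\psi(x)\ne\psi(x_0)$ there exists $z\in Z$ with $z\in\psi'(x_0,x-x_0)\setminus(-C)$, then $\psi(x_0)\in\operatorname{Eff}\psi[S]$.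
   Context: $X$ real linear space, $Z$ real locally convex Hausdorff space with dual $Z^*$, $C\subseteq Z$ closed convex cone, $0\in C$, $C^-=\{z^*:z^*(c)\le0\ \forall c\in C\}$, $C^-\setminus\{0\}\ne\emptyset$. $\psi:S\to Z$ is $C$-convex if $S$ is convex and $(1-t)\psi(x_1)+t\psi(x_2)\in\psi(x_1+t(x_2-x_1))+C$. $f=\psi^C$: $f(x)=\psi(x)+C$ for $x\in S$, $\emptyset$ otherwise; $\operatorname{dom}f=S$. $A\ominus B=\{z:B+\{z\}\subseteq A\}$; $f'(x,u)=\bigcap_{t_0>0}\operatorname{cl}\operatorname{co}\bigcup_{0<t<t_0}\frac1t(f(x+tu)\ominus f(x))$. $\varphi_{f,z^*}(x)=-z^*(\psi(x))$ for $x\in S$, $+\infty$ otherwise; on $\overline{\mathbb R}$: inf-addition $\dot+$ ($(-\infty)\dot+(+\infty)=+\infty$), $r\ominus s=\inf\{t\in\mathbb R:r\le s\dot+t\}$; $\varphi'_{f,z^*}(x,u)=\inf_{t>0}\frac1t(\varphi_{f,z^*}(x+tu)\ominus\varphi_{f,z^*}(x))$. $\psi(x_0)\in\operatorname{Eff}\psi[S]$: for all $y\in\psi[S]$, $\psi(x_0)\in y+C$ implies $\psi(x_0)\in y+(C\cap-C)$. Dini derivative $\psi'(x_0,v)$: the set of limits in $\tilde Z=Z\cup Z_\infty$ of $\frac1{t_i}(\psi(x_0+t_iv)-\psi(x_0))$ along sequences $t_i\downarrow0$, where $Z_\infty$ consists of infinite elements $z_\infty$ in direction $z$ ($z_\infty=y_\infty$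 iff $y=\lambda z$, $\lambda>0$; $0_\infty=0$), $\tilde Z$ topologized by neighborhood bases $z+U$ for $z\in Z$ and $(\{tz\}+\operatorname{cone}(U+\{z\}))\cup\{a_\infty: a\in (U+\{z\})\setminus\{0\}\}$ ($t>0$) for $z_\infty$, $z\ne0$, with $U$ closed convex balanced $0$-neighborhoods. *)

theory Defs
  imports "HOL-Analysis.Analysis" "HOL-Library.Extended_Real"
begin

text \<open>Z is a real locally convex Hausdorff topological vector space: Hausdorff comes
from the type class t2_space; the remaining axioms are this predicate.\<close>
definition lctvs :: "'z::{real_vector,t2_space} itself \<Rightarrow> bool" where
  "lctvs _ \<longleftrightarrow>
     continuous_on UNIV (\<lambda>p::'z \<times> 'z. fst p + snd p) \<and>
     continuous_on UNIV (\<lambda>p::real \<times> 'z. fst p *\<^sub>R snd p) \<and>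
     (\<forall>V::'z set. open V \<and> 0 \<in> V \<longrightarrow> (\<exists>U. open U \<and> convex U \<and> 0 \<in> U \<and> U \<subseteq> V))"

definition dualsp :: "('z::{real_vector,topological_space} \<Rightarrow> real) set" where
  "dualsp = {g. linear g \<and> continuous_on UNIV g}"

definition closed_convex_cone :: "'z::{real_vector,topological_space} set \<Rightarrow> bool" where
  "closed_convex_cone C \<longleftrightarrow> closed C \<and> convex C \<and> cone C"

definition negdual :: "'z::{real_vector,topological_space} set \<Rightarrow> ('z \<Rightarrow> real) set" where
  "negdual C = {g \<in> dualsp. \<forall>c\<in>C. g c \<le> 0}"

definition C_convex :: "'x::real_vector set \<Rightarrow> 'z::real_vector set \<Rightarrow> ('x \<Rightarrow> 'z) \<Rightarrow> bool" where
  "C_convex S C \<psi> \<longleftrightarrow> convex S \<and>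
     (\<forall>x1\<in>S. \<forall>x2\<in>S. \<forall>t::real. 0 \<le> t \<and> t \<le> 1 \<longrightarrow>
        (1 - t) *\<^sub>R \<psi> x1 + t *\<^sub>R \<psi> x2 \<in> {\<psi> (x1 + t *\<^sub>R (x2 - x1)) + c | c. c \<in> C})"

definition fC :: "'x::real_vector set \<Rightarrow> ('x \<Rightarrow> 'z::real_vector) \<Rightarrow> 'z set \<Rightarrow> 'x \<Rightarrow> 'z set" where
  "fC S \<psi> C x = (if x \<in> S then {\<psi> x + c | c. c \<in> C} else {})"

definition setminus_ominus :: "'z::real_vector set \<Rightarrow> 'z set \<Rightarrow> 'z set" where
  "setminus_ominus A B = {z. (\<lambda>b. b + z) ` B \<subseteq> A}"

definition setder :: "('x::real_vector \<Rightarrow> 'z::{real_vector,topological_space} set) \<Rightarrow> 'x \<Rightarrow> 'x \<Rightarrow> 'z set" where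
  "setder f x u = (\<Inter>t0\<in>{0<..}. closure (convex hull
      (\<Union>t\<in>{0<..<t0}. (\<lambda>z. (1 / t) *\<^sub>R z) ` setminus_ominus (f (x + t *\<^sub>R u)) (f x))))"

definition phiC :: "'x::real_vector set \<Rightarrow> ('x \<Rightarrow> 'z::real_vector) \<Rightarrow> ('z \<Rightarrow> real) \<Rightarrow> 'x \<Rightarrow> ereal" where
  "phiC S \<psi> g x = (if x \<in> S then ereal (- g (\<psi> x)) else \<infinity>)"

text \<open>inf-addition on the extended reals: (-inf) + (+inf) = +inf\<close>
definition inf_add :: "ereal \<Rightarrow> ereal \<Rightarrow> ereal" where
  "inf_add r s = (if r = \<infinity> \<or> s = \<infinity> then \<infinity> else r + s)"

definition ereal_ominus :: "ereal \<Rightarrow> ereal \<Rightarrow> ereal" where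
  "ereal_ominus r s = Inf {ereal t | t. r \<le> inf_add s (ereal t)}"

definition phider :: "('x::real_vector \<Rightarrow> ereal) \<Rightarrow> 'x \<Rightarrow> 'x \<Rightarrow> ereal" where
  "phider \<phi> x u = (INF t\<in>{0<..}. ereal (1 / t) * ereal_ominus (\<phi> (x + t *\<^sub>R u)) (\<phi> x))"

definition balanced_set :: "'z::real_vector set \<Rightarrow> bool" where
  "balanced_set U \<longleftrightarrow> (\<forall>a::real. \<bar>a\<bar> \<le> 1 \<longrightarrow> (\<lambda>u. a *\<^sub>R u) ` U \<subseteq> U)"

text \<open>Convergence in the extended space Z~ to a finite point z: every basic neighbourhood
  z + U (U closed convex balanced 0-neighbourhood) eventually contains the sequence.\<close>
definition tilde_conv_fin :: "(nat \<Rightarrow> 'z::{real_vector,topological_space}) \<Rightarrow> 'z \<Rightarrow> bool" where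
  "tilde_conv_fin q z \<longleftrightarrow>
     (\<forall>U. closed U \<and> convex U \<and> balanced_set U \<and> 0 \<in> interior U \<longrightarrow>
        (\<forall>\<^sub>F i in sequentially. q i \<in> (\<lambda>u. z + u) ` U))"

text \<open>Finite elements of the Dini derivative psi'(x0,v).\<close>
definition dini_fin :: "('x::real_vector \<Rightarrow> 'z::{real_vector,topological_space}) \<Rightarrow> 'x \<Rightarrow> 'x \<Rightarrow> 'z set" where
  "dini_fin \<psi> x0 v = {z. \<exists>t::nat \<Rightarrow> real. (\<forall>i. 0 < t i) \<and> decseq t \<and> t \<longlonglongrightarrow> 0 \<and>
      tilde_conv_fin (\<lambda>i. (1 / t i) *\<^sub>R (\<psi> (x0 + t i *\<^sub>R v) - \<psi> x0)) z}"

definition Eff_pt :: "'z::real_vector set \<Rightarrow> 'z set \<Rightarrow> 'z \<Rightarrow> bool" where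
  "Eff_pt C A y0 \<longleftrightarrow> y0 \<in> A \<and>
     (\<forall>y\<in>A. y0 \<in> {y + c | c. c \<in> C} \<longrightarrow> y0 \<in> {y + c | c. c \<in> C \<inter> uminus ` C})"

end

theory Submission imports Defs begin

definition sublin :: "('z::real_vector \<Rightarrow> real) \<Rightarrow> bool" where
  "sublin q \<longleftrightarrow> (\<forall>x y. q (x + y) \<le> q x + q y) \<and> (\<forall>a x. 0 \<le> a \<longrightarrow> q (a *\<^sub>R x) \<le> a * q x)"

lemma sublin_0: "sublin q \<Longrightarrow> q 0 = 0"
proof -
  assume s: "sublin q"
  have "q (0 *\<^sub>R 0) \<le> 0 * q 0" using s unfolding sublin_def by blast
  moreover have "q (0 + 0) \<le> q 0 + q 0" using s unfolding sublin_def by blast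
  ultimately show ?thesis by simp
qed

lemma sublin_neg: "sublin q \<Longrightarrow> - q (- x) \<le> q x"
proof -
  assume s: "sublin q"
  have "q (x + - x) \<le> q x + q (-x)" using s unfolding sublin_def by blast
  thus ?thesis using sublin_0[OF s] by simp
qed

lemma sublin_add: "sublin q \<Longrightarrow> q (x + y) \<le> q x + q y" unfolding sublin_def by blast
lemma sublin_hom: "sublin q \<Longrightarrow> 0 \<le> a \<Longrightarrow> q (a *\<^sub>R x) \<le> a * q x" unfolding sublin_def by blast

lemma sublin_hom_eq: assumes s: "sublin q" and a: "0 < a" shows "q (a *\<^sub>R x) = a * q x"
proof -
  have "q ((1/a) *\<^sub>R (a *\<^sub>R x)) \<le> (1/a) * q (a *\<^sub>R x)" by (rule sublin_hom[OF s]) (use a in simp)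
  hence "q x \<le> (1/a) * q (a *\<^sub>R x)" using a by simp
  hence "a * q x \<le> q (a *\<^sub>R x)" using a by (simp add: field_simps)
  thus ?thesis using sublin_hom[OF s, of a x] a by simp
qed

lemma sublin_minimal_linear:
  assumes s: "sublin q" and mini: "\<And>q'. sublin q' \<Longrightarrow> q' \<le> q \<Longrightarrow> q' = q"
  shows "linear q"
proof -
  have addq: "q (x + y) = q x + q y" for x y
  proof -
    define qy where "qy = (\<lambda>x. Inf ((\<lambda>t. q (x + t *\<^sub>R y) - t * q y) ` {0..}))"
    have bdd: "bdd_below ((\<lambda>t. q (x + t *\<^sub>R y) - t * q y) ` {0..})" for x
    proof (rule bdd_belowI2)
      fix t :: real assume "t \<in> {0..}"
      hence t: "0 \<le> t" by simp
      have "q (t *\<^sub>R y) \<le> q (x + t *\<^sub>R y) + q (- x)"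
        using sublin_add[OF s, of "x + t *\<^sub>R y" "-x"] by simp
      thus "- q (-x) \<le> q (x + t *\<^sub>R y) - t * q y"
        using sublin_hom_eq[OF s, of t y] sublin_0[OF s] t
        by (cases "t = 0") auto
    qed
    have low: "qy x \<le> q (x + t *\<^sub>R y) - t * q y" if "0 \<le> t" for x t
      unfolding qy_def using that by (intro cInf_lower[OF _ bdd]) auto
    have great: "c \<le> qy x" if "\<And>t. 0 \<le> t \<Longrightarrow> c \<le> q (x + t *\<^sub>R y) - t * q y" for x c
      unfolding qy_def using that by (intro cInf_greatest) auto
    have "sublin qy"
      unfolding sublin_def
    proof (intro conjI allI impI)
      fix x1 x2
      have "qy (x1 + x2) - (q (x2 + t *\<^sub>R y) - t * q y) \<le> qy x1" if t: "0 \<le> t" for t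
      proof (rule great)
        fix r :: real assume r0: "0 \<le> r"
        have "qy (x1 + x2) \<le> q ((x1 + x2) + (r + t) *\<^sub>R y) - (r + t) * q y"
          using low r0 t by simp
        also have "q ((x1 + x2) + (r + t) *\<^sub>R y) \<le> q (x1 + r *\<^sub>R y) + q (x2 + t *\<^sub>R y)"
          using sublin_add[OF s, of "x1 + r *\<^sub>R y" "x2 + t *\<^sub>R y"]
          by (simp add: algebra_simps scaleR_add_left)
        finally show "qy (x1 + x2) - (q (x2 + t *\<^sub>R y) - t * q y) \<le> q (x1 + r *\<^sub>R y) - r * q y"
          by (simp add: algebra_simps)
      qed
      hence "qy (x1 + x2) - qy x1 \<le> qy x2" by (intro great) (simp add: algebra_simps)
      thus "qy (x1 + x2) \<le> qy x1 + qy x2" by simp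
    next
      fix a :: real and x assume a: "0 \<le> a"
      show "qy (a *\<^sub>R x) \<le> a * qy x"
      proof (cases "a = 0")
        case True
        have "qy 0 \<le> q (0 + 0 *\<^sub>R y) - 0 * q y" by (rule low) simp
        thus ?thesis using True sublin_0[OF s] by simp
      next
        case False
        hence a0: "0 < a" using a by simp
        have "qy (a *\<^sub>R x) / a \<le> qy x"
        proof (rule great)
          fix t :: real assume t: "0 \<le> t"
          have "qy (a *\<^sub>R x) \<le> q (a *\<^sub>R x + (a * t) *\<^sub>R y) - (a * t) * q y"
            using low a t by simp
          also have "q (a *\<^sub>R x + (a * t) *\<^sub>R y) = a * q (x + t *\<^sub>R y)"
            using sublin_hom_eq[OF s a0, of "x + t *\<^sub>R y"] by (simp add: scaleR_add_right)
          finally show "qy (a *\<^sub>R x) / a \<le> q (x + t *\<^sub>R y) - t * q y"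
            using a0 by (simp add: field_simps)
        qed
        thus ?thesis using a0 by (simp add: field_simps)
      qed
    qed
    moreover have "qy \<le> q"
    proof (rule le_funI)
      fix x show "qy x \<le> q x" using low[of 0 x] by simp
    qed
    ultimately have "qy = q" by (rule mini)
    hence "q x \<le> q (x + 1 *\<^sub>R y) - 1 * q y" using low[of 1 x] by simp
    hence "q x + q y \<le> q (x + y)" by simp
    thus ?thesis using sublin_add[OF s, of x y] by simp
  qed
  have negq: "q (- x) = - q x" for x
    using addq[of x "-x"] sublin_0[OF s] by simp
  have scq: "q (a *\<^sub>R x) = a * q x" for a x
  proof (cases "0 < a")
    case True thus ?thesis by (rule sublin_hom_eq[OF s])
  next
    case False
    show ?thesis
    proof (cases "a = 0")
      case True thus ?thesis using sublin_0[OF s] by simp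
    next
      case False
      hence "0 < - a" using \<open>\<not> 0 < a\<close> by simp
      hence "q ((- a) *\<^sub>R x) = (- a) * q x" by (rule sublin_hom_eq[OF s])
      hence "q (- (a *\<^sub>R x)) = - (a * q x)" by simp
      thus ?thesis using negq[of "a *\<^sub>R x"] by simp
    qed
  qed
  show ?thesis by (rule linearI) (simp_all add: addq scq)
qed

lemma HB_core:
  fixes p :: "'z::real_vector \<Rightarrow> real"
  assumes sp: "sublin p"
  shows "\<exists>L. linear L \<and> (\<forall>x. L x \<le> p x)"
proof -
  define P where "P = {q. sublin q \<and> q \<le> p}"
  define r where "r = {(q, q'). q \<in> P \<and> q' \<in> P \<and> q' \<le> q}"
  have pP: "p \<in> P" using sp unfolding P_def by simp
  have Fr: "Field r = P" unfolding r_def Field_def by auto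
  have po: "Partial_order r"
    unfolding Fr partial_order_on_def preorder_on_def refl_on_def trans_def antisym_def
    unfolding r_def by (auto intro: order_trans antisym)
  have "\<exists>m\<in>Field r. \<forall>a\<in>Field r. (m, a) \<in> r \<longrightarrow> a = m"
  proof (rule Zorns_po_lemma[OF po])
    fix C assume C: "C \<in> Chains r"
    show "\<exists>u\<in>Field r. \<forall>a\<in>C. (a, u) \<in> r"
    proof (cases "C = {}")
      case True thus ?thesis using pP Fr by auto
    next
      case False
      have CP: "C \<subseteq> P" using C unfolding Chains_def r_def by auto
      have cmp: "\<And>a b. a \<in> C \<Longrightarrow> b \<in> C \<Longrightarrow> a \<le> b \<or> b \<le> a"
        using C unfolding Chains_def r_def by auto
      define I where "I = (\<lambda>x. Inf ((\<lambda>q. q x) ` C))"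
      have bdd: "bdd_below ((\<lambda>q. q x) ` C)" for x
      proof (rule bdd_belowI2)
        fix q assume "q \<in> C"
        hence q: "sublin q" "q \<le> p" using CP unfolding P_def by auto
        have "- p (- x) \<le> - q (-x)" using q(2) by (simp add: le_fun_def)
        also have "\<dots> \<le> q x" by (rule sublin_neg[OF q(1)])
        finally show "- p (- x) \<le> q x" .
      qed
      have low: "q \<in> C \<Longrightarrow> I x \<le> q x" for q x
        unfolding I_def by (rule cInf_lower[OF _ bdd]) auto
      have great: "(\<And>q. q \<in> C \<Longrightarrow> c \<le> q x) \<Longrightarrow> c \<le> I x" for c x
        unfolding I_def using False by (intro cInf_greatest) auto
      have subl: "sublin I"
        unfolding sublin_def
      proof (intro conjI allI impI)
        fix x y
        have "I (x + y) - q2 y \<le> I x" if q2: "q2 \<in> C" for q2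
        proof (rule great)
          fix q1 assume q1: "q1 \<in> C"
          show "I (x + y) - q2 y \<le> q1 x"
          proof (cases "q1 \<le> q2")
            case True
            have "I (x + y) \<le> q1 (x + y)" using low q1 .
            also have "\<dots> \<le> q1 x + q1 y" using sublin_add CP q1 unfolding P_def by blast
            finally show ?thesis using True by (auto simp: le_fun_def) (smt (verit))
          next
            case False
            hence "q2 \<le> q1" using cmp q1 q2 by blast
            have "I (x + y) \<le> q2 (x + y)" using low q2 .
            also have "\<dots> \<le> q2 x + q2 y" using sublin_add CP q2 unfolding P_def by blast
            finally show ?thesis using \<open>q2 \<le> q1\<close> by (auto simp: le_fun_def) (smt (verit))
          qed
        qed
        hence "I (x + y) - I x \<le> I y" by (intro great) (smt (verit))
        thus "I (x + y) \<le> I x + I y" by simp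
      next
        fix a :: real and x assume a: "0 \<le> a"
        show "I (a *\<^sub>R x) \<le> a * I x"
        proof (cases "a = 0")
          case True
          obtain q where q: "q \<in> C" using False by auto
          have "I 0 \<le> q 0" by (rule low[OF q])
          moreover have "q 0 = 0" using sublin_0 q CP unfolding P_def by auto
          ultimately show ?thesis using True by simp
        next
          case False
          hence a0: "0 < a" using a by simp
          have "I (a *\<^sub>R x) / a \<le> I x"
          proof (rule great)
            fix q assume q: "q \<in> C"
            have "I (a *\<^sub>R x) \<le> q (a *\<^sub>R x)" by (rule low[OF q])
            also have "\<dots> \<le> a * q x" using sublin_hom q CP a unfolding P_def by blast
            finally show "I (a *\<^sub>R x) / a \<le> q x" using a0 by (simp add: field_simps)
          qed
          thus ?thesis using a0 by (simp add: field_simps)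
        qed
      qed
      have Ip: "I \<le> p"
      proof (rule le_funI)
        fix x
        obtain q where q: "q \<in> C" using False by auto
        have "I x \<le> q x" by (rule low[OF q])
        also have "\<dots> \<le> p x" using q CP unfolding P_def by (auto simp: le_fun_def)
        finally show "I x \<le> p x" .
      qed
      have IP: "I \<in> P" using subl Ip unfolding P_def by simp
      show ?thesis
      proof (intro bexI ballI)
        fix a assume "a \<in> C"
        thus "(a, I) \<in> r" using IP CP low unfolding r_def by (auto simp: le_fun_def)
      next
        show "I \<in> Field r" using IP Fr by simp
      qed
    qed
  qed
  then obtain m where mP: "m \<in> P" and mmin: "\<And>a. a \<in> P \<Longrightarrow> (m, a) \<in> r \<Longrightarrow> a = m"
    using Fr by auto
  have sm: "sublin m" and mp: "m \<le> p" using mP unfolding P_def by auto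
  have "linear m"
  proof (rule sublin_minimal_linear[OF sm])
    fix q' assume "sublin q'" "q' \<le> m"
    moreover hence "q' \<in> P" using mp unfolding P_def by (auto intro: order_trans)
    ultimately show "q' = m" using mmin mP unfolding r_def by auto
  qed
  thus ?thesis using mp by (auto simp: le_fun_def)
qed

lemma lct_scale:
  assumes Z: "lctvs TYPE('z::{real_vector,t2_space})"
  shows "continuous_on UNIV (\<lambda>w::'z. a *\<^sub>R w)"
proof -
  have c: "continuous_on UNIV (\<lambda>p::real \<times> 'z. fst p *\<^sub>R snd p)" using Z unfolding lctvs_def by blast
  have "continuous_on UNIV ((\<lambda>p::real \<times> 'z. fst p *\<^sub>R snd p) \<circ> (\<lambda>w. (a, w)))"
    by (rule continuous_on_compose) (auto intro!: continuous_intros intro: continuous_on_subset[OF c])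
  thus ?thesis by (simp add: o_def)
qed

lemma lct_ray:
  assumes Z: "lctvs TYPE('z::{real_vector,t2_space})"
  shows "continuous_on UNIV (\<lambda>s::real. s *\<^sub>R (x::'z))"
proof -
  have c: "continuous_on UNIV (\<lambda>p::real \<times> 'z. fst p *\<^sub>R snd p)" using Z unfolding lctvs_def by blast
  have "continuous_on UNIV ((\<lambda>p::real \<times> 'z. fst p *\<^sub>R snd p) \<circ> (\<lambda>s. (s, x)))"
    by (rule continuous_on_compose) (auto intro!: continuous_intros intro: continuous_on_subset[OF c])
  thus ?thesis by (simp add: o_def)
qed

lemma lct_aff:
  assumes Z: "lctvs TYPE('z::{real_vector,t2_space})"
  shows "continuous_on UNIV (\<lambda>w::'z. a *\<^sub>R w + b)"
proof -
  have c: "continuous_on UNIV (\<lambda>p::'z \<times> 'z. fst p + snd p)" using Z unfolding lctvs_def by blast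
  have "continuous_on UNIV ((\<lambda>p::'z \<times> 'z. fst p + snd p) \<circ> (\<lambda>w. (a *\<^sub>R w, b)))"
    by (rule continuous_on_compose) (auto intro!: continuous_intros lct_scale[OF Z] intro: continuous_on_subset[OF c])
  thus ?thesis by (simp add: o_def)
qed

lemma lct_aff_open:
  assumes Z: "lctvs TYPE('z::{real_vector,t2_space})" and "open (B::'z set)"
  shows "open {w. a *\<^sub>R w + b \<in> B}"
proof -
  have "open ((\<lambda>w::'z. a *\<^sub>R w + b) -` B)" by (rule open_vimage[OF assms(2) lct_aff[OF Z]])
  thus ?thesis by (simp add: vimage_def)
qed

lemma lct_ray_small:
  assumes Z: "lctvs TYPE('z::{real_vector,t2_space})" and W: "open (W::'z set)" and s0: "s0 *\<^sub>R x \<in> W"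
  shows "\<exists>e>0. \<forall>s. \<bar>s - s0\<bar> < e \<longrightarrow> s *\<^sub>R x \<in> W"
proof -
  have "open ((\<lambda>s::real. s *\<^sub>R x) -` W)" by (rule open_vimage[OF W lct_ray[OF Z]])
  then obtain e where "e > 0" "\<forall>y. dist y s0 < e \<longrightarrow> y \<in> (\<lambda>s::real. s *\<^sub>R x) -` W"
    using s0 unfolding open_dist by blast
  thus ?thesis by (auto simp: dist_real_def)
qed

lemma separation:
  fixes K :: "'z::{real_vector,t2_space} set"
  assumes Z: "lctvs TYPE('z)" and K: "convex K" and V: "open V" "0 \<in> V" "V \<inter> K = {}"
  shows "\<exists>h::'z \<Rightarrow> real. linear h \<and> continuous_on UNIV h \<and> (\<forall>k\<in>K. 1 \<le> h k)"
proof (cases "K = {}")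
  case True
  thus ?thesis by (intro exI[of _ "\<lambda>_. 0"]) (auto intro: linear_zero)
next
  case False
  then obtain k0 where k0: "k0 \<in> K" by auto
  obtain U where U: "open U" "convex U" "0 \<in> U" "U \<subseteq> V" using Z V unfolding lctvs_def by blast
  define W where "W = {z. \<exists>k\<in>K. z + k - k0 \<in> U}"
  have Wopen: "open W"
  proof -
    have "W = (\<Union>k\<in>K. {z. 1 *\<^sub>R z + (k - k0) \<in> U})" unfolding W_def by (auto simp: algebra_simps)
    moreover have "open {z. 1 *\<^sub>R z + (k - k0) \<in> U}" for k by (rule lct_aff_open[OF Z U(1)])
    ultimately show ?thesis by (metis (no_types, lifting) open_UN)
  qed
  have Wconv: "convex W"
    unfolding convex_alt
  proof (intro ballI allI impI)
    fix x y and u :: real assume x: "x \<in> W" and y: "y \<in> W" and u: "0 \<le> u \<and> u \<le> 1"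
    obtain k1 where k1: "k1 \<in> K" "x + k1 - k0 \<in> U" using x unfolding W_def by blast
    obtain k2 where k2: "k2 \<in> K" "y + k2 - k0 \<in> U" using y unfolding W_def by blast
    have kk: "(1 - u) *\<^sub>R k1 + u *\<^sub>R k2 \<in> K" using K k1 k2 u unfolding convex_alt by blast
    have uu: "(1 - u) *\<^sub>R (x + k1 - k0) + u *\<^sub>R (y + k2 - k0) \<in> U" using U(2) k1 k2 u unfolding convex_alt by blast
    have "((1 - u) *\<^sub>R x + u *\<^sub>R y) + ((1 - u) *\<^sub>R k1 + u *\<^sub>R k2) - k0
        = (1 - u) *\<^sub>R (x + k1 - k0) + u *\<^sub>R (y + k2 - k0)" by (simp add: algebra_simps)
    thus "(1 - u) *\<^sub>R x + u *\<^sub>R y \<in> W" unfolding W_def using kk uu by (metis (mono_tags, lifting) mem_Collect_eq)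
  qed
  have W0: "0 \<in> W" unfolding W_def using k0 U(3) by (auto intro!: bexI[of _ k0])
  have k0W: "k0 \<notin> W"
  proof
    assume "k0 \<in> W"
    then obtain k where "k \<in> K" "k0 + k - k0 \<in> U" unfolding W_def by blast
    thus False using U(4) V(3) by auto
  qed
  define T where "T = (\<lambda>x. {t::real. 0 < t \<and> (1/t) *\<^sub>R x \<in> W})"
  define p where "p = (\<lambda>x. Inf (T x))"
  have Tne: "T x \<noteq> {}" for x
  proof -
    obtain e where e: "e > 0" "\<forall>s. \<bar>s - 0\<bar> < e \<longrightarrow> s *\<^sub>R x \<in> W"
      using lct_ray_small[OF Z Wopen, of 0 x] W0 by auto
    have "(1 / (2/e)) *\<^sub>R x \<in> W" using e by auto
    thus ?thesis unfolding T_def using e(1) by (auto intro!: exI[of _ "2/e"])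
  qed
  have Tbdd: "bdd_below (T x)" for x unfolding T_def by (rule bdd_belowI[of _ 0]) auto
  have plow: "t \<in> T x \<Longrightarrow> p x \<le> t" for t x unfolding p_def by (rule cInf_lower[OF _ Tbdd])
  have pgreat: "(\<And>t. t \<in> T x \<Longrightarrow> c \<le> t) \<Longrightarrow> c \<le> p x" for c x
    unfolding p_def by (rule cInf_greatest[OF Tne])
  have psub: "sublin p"
    unfolding sublin_def
  proof (intro conjI allI impI)
    fix x y
    have "p (x + y) - t \<le> p x" if t: "t \<in> T y" for t
    proof (rule pgreat)
      fix s assume s: "s \<in> T x"
      have st: "s + t \<in> T (x + y)"
      proof -
        have s0: "0 < s" and t0: "0 < t" using s t unfolding T_def by auto
        have "(s/(s+t)) *\<^sub>R ((1/s) *\<^sub>R x) + (t/(s+t)) *\<^sub>R ((1/t) *\<^sub>R y) \<in> W"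
        proof (rule convexD[OF Wconv])
          show "(1/s) *\<^sub>R x \<in> W" "(1/t) *\<^sub>R y \<in> W" using s t unfolding T_def by auto
          show "0 \<le> s/(s+t)" "0 \<le> t/(s+t)" using s0 t0 by auto
          show "s/(s+t) + t/(s+t) = 1" using s0 t0 by (simp add: add_divide_distrib[symmetric])
        qed
        moreover have "(s/(s+t)) *\<^sub>R ((1/s) *\<^sub>R x) + (t/(s+t)) *\<^sub>R ((1/t) *\<^sub>R y) = (1/(s+t)) *\<^sub>R (x + y)"
          using s0 t0 by (simp add: scaleR_add_right)
        ultimately have "(1/(s+t)) *\<^sub>R (x + y) \<in> W" by simp
        moreover have "0 < s + t" using s0 t0 by simp
        ultimately show ?thesis unfolding T_def by blast
      qed
      have "p (x + y) \<le> s + t" by (rule plow[OF st])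
      thus "p (x + y) - t \<le> s" by simp
    qed
    hence "p (x + y) - p x \<le> p y" by (intro pgreat) (smt (verit))
    thus "p (x + y) \<le> p x + p y" by simp
  next
    fix a :: real and x assume a: "0 \<le> a"
    show "p (a *\<^sub>R x) \<le> a * p x"
    proof (cases "a = 0")
      case True
      have "p 0 \<le> t" if "t > 0" for t using plow[of t 0] that W0 unfolding T_def by auto
      hence "p 0 \<le> 0" by (rule field_le_epsilon) simp
      thus ?thesis using True by simp
    next
      case False
      hence a0: "0 < a" using a by simp
      have "p (a *\<^sub>R x) / a \<le> p x"
      proof (rule pgreat)
        fix t assume t: "t \<in> T x"
        have t0: "0 < t" and tx: "(1/t) *\<^sub>R x \<in> W" using t unfolding T_def by auto
        have "(1/(a*t)) *\<^sub>R (a *\<^sub>R x) = (1/t) *\<^sub>R x" using a0 by simp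
        hence "a * t \<in> T (a *\<^sub>R x)" using tx t0 a0 unfolding T_def by simp
        hence "p (a *\<^sub>R x) \<le> a * t" by (rule plow)
        thus "p (a *\<^sub>R x) / a \<le> t" using a0 by (simp add: field_simps)
      qed
      thus ?thesis using a0 by (simp add: field_simps)
    qed
  qed
  have pW: "p x < 1" if x: "x \<in> W" for x
  proof -
    obtain e where e: "e > 0" "\<forall>s. \<bar>s - 1\<bar> < e \<longrightarrow> s *\<^sub>R x \<in> W"
      using lct_ray_small[OF Z Wopen, of 1 x] x by auto
    define s where "s = 1 + e/2"
    have "s *\<^sub>R x \<in> W" using e unfolding s_def by auto
    hence "1/s \<in> T x" unfolding T_def s_def using e(1) by auto
    hence "p x \<le> 1/s" by (rule plow)
    also have "1/s < 1" unfolding s_def using e(1) by auto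
    finally show ?thesis .
  qed
  have pk0: "1 \<le> p k0"
  proof (rule ccontr)
    assume "\<not> 1 \<le> p k0"
    hence "Inf (T k0) < 1" unfolding p_def by simp
    then obtain t where t: "t \<in> T k0" "t < 1" using cInf_lessD[OF Tne] by blast
    have t0: "0 < t" and tw: "(1/t) *\<^sub>R k0 \<in> W" using t unfolding T_def by auto
    have "(1 - t) *\<^sub>R 0 + t *\<^sub>R ((1/t) *\<^sub>R k0) \<in> W"
      by (rule convexD[OF Wconv W0 tw]) (use t t0 in auto)
    thus False using k0W t0 by simp
  qed
  have pnn: "0 \<le> p x" for x by (rule pgreat) (simp add: T_def)
  define p' where "p' = (\<lambda>x. Inf ((\<lambda>t. p (x + t *\<^sub>R k0) - t) ` {0..}))"
  have bdd': "bdd_below ((\<lambda>t. p (x + t *\<^sub>R k0) - t) ` {0..})" for x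
  proof (rule bdd_belowI2)
    fix t :: real assume "t \<in> {0..}"
    hence t: "0 \<le> t" by simp
    have "t \<le> t * p k0" using pk0 t by (simp add: mult_le_cancel_left1)
    also have "t * p k0 = p (t *\<^sub>R k0)"
      using sublin_hom_eq[OF psub, of t k0] sublin_0[OF psub] t by (cases "t = 0") auto
    also have "p (t *\<^sub>R k0) \<le> p (x + t *\<^sub>R k0) + p (- x)"
      using sublin_add[OF psub, of "x + t *\<^sub>R k0" "-x"] by simp
    finally show "- p (-x) \<le> p (x + t *\<^sub>R k0) - t" by simp
  qed
  have low': "0 \<le> t \<Longrightarrow> p' x \<le> p (x + t *\<^sub>R k0) - t" for x t
    unfolding p'_def by (rule cInf_lower[OF _ bdd']) auto
  have great': "(\<And>t. 0 \<le> t \<Longrightarrow> c \<le> p (x + t *\<^sub>R k0) - t) \<Longrightarrow> c \<le> p' x" for x c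
    unfolding p'_def by (intro cInf_greatest) auto
  have psub': "sublin p'"
    unfolding sublin_def
  proof (intro conjI allI impI)
    fix x1 x2
    have "p' (x1 + x2) - (p (x2 + t *\<^sub>R k0) - t) \<le> p' x1" if t: "0 \<le> t" for t
    proof (rule great')
      fix r :: real assume r0: "0 \<le> r"
      have "p' (x1 + x2) \<le> p ((x1 + x2) + (r + t) *\<^sub>R k0) - (r + t)"
        using low' r0 t by simp
      also have "p ((x1 + x2) + (r + t) *\<^sub>R k0) \<le> p (x1 + r *\<^sub>R k0) + p (x2 + t *\<^sub>R k0)"
        using sublin_add[OF psub, of "x1 + r *\<^sub>R k0" "x2 + t *\<^sub>R k0"]
        by (simp add: algebra_simps scaleR_add_left)
      finally show "p' (x1 + x2) - (p (x2 + t *\<^sub>R k0) - t) \<le> p (x1 + r *\<^sub>R k0) - r"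
        by (simp add: algebra_simps)
    qed
    hence "p' (x1 + x2) - p' x1 \<le> p' x2" by (intro great') (simp add: algebra_simps)
    thus "p' (x1 + x2) \<le> p' x1 + p' x2" by simp
  next
    fix a :: real and x assume a: "0 \<le> a"
    show "p' (a *\<^sub>R x) \<le> a * p' x"
    proof (cases "a = 0")
      case True
      have "p' 0 \<le> p (0 + 0 *\<^sub>R k0) - 0" by (rule low') simp
      thus ?thesis using True sublin_0[OF psub] by simp
    next
      case False
      hence a0: "0 < a" using a by simp
      have "p' (a *\<^sub>R x) / a \<le> p' x"
      proof (rule great')
        fix t :: real assume t: "0 \<le> t"
        have "p' (a *\<^sub>R x) \<le> p (a *\<^sub>R x + (a * t) *\<^sub>R k0) - (a * t)"
          using low' a t by simp
        also have "p (a *\<^sub>R x + (a * t) *\<^sub>R k0) = a * p (x + t *\<^sub>R k0)"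
          using sublin_hom_eq[OF psub a0, of "x + t *\<^sub>R k0"] by (simp add: scaleR_add_right)
        finally show "p' (a *\<^sub>R x) / a \<le> p (x + t *\<^sub>R k0) - t"
          using a0 by (simp add: field_simps)
      qed
      thus ?thesis using a0 by (simp add: field_simps)
    qed
  qed
  obtain L where L: "linear L" "\<And>x. L x \<le> p' x" using HB_core[OF psub'] by blast
  have p'p: "p' x \<le> p x" for x using low'[of 0 x] by simp
  have "p' (- k0) \<le> p (- k0 + 1 *\<^sub>R k0) - 1" by (rule low') simp
  hence "p' (- k0) \<le> -1" using sublin_0[OF psub] by simp
  hence Lk0: "1 \<le> L k0" using L(2)[of "-k0"] real_vector.linear_neg[OF L(1), of k0] by simp
  have LW: "L x < 1" if "x \<in> W" for x using L(2)[of x] p'p[of x] pW[OF that] by simp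
  define N0 where "N0 = {z. 1 *\<^sub>R z + 0 \<in> W} \<inter> {z. (-1) *\<^sub>R z + 0 \<in> W}"
  have N0o: "open N0" unfolding N0_def using lct_aff_open[OF Z Wopen] by blast
  have N00: "0 \<in> N0" unfolding N0_def using W0 by simp
  have N0L: "\<bar>L z\<bar> < 1" if "z \<in> N0" for z
    using that LW[of z] LW[of "-z"] real_vector.linear_neg[OF L(1), of z] unfolding N0_def by auto
  have Lcont: "continuous_on UNIV L"
    unfolding continuous_on_topological
  proof (intro ballI allI impI)
    fix y and B :: "real set" assume "open B" "L y \<in> B"
    then obtain e where e: "e > 0" "\<forall>r. dist r (L y) < e \<longrightarrow> r \<in> B" unfolding open_dist by blast
    define A where "A = {z. (1/e) *\<^sub>R z + (- (1/e) *\<^sub>R y) \<in> N0}"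
    have "open A" unfolding A_def by (rule lct_aff_open[OF Z N0o])
    moreover have "y \<in> A" unfolding A_def using N00 by simp
    moreover have "L z \<in> B" if "z \<in> A" for z
    proof -
      have "\<bar>L ((1/e) *\<^sub>R z + (- (1/e) *\<^sub>R y))\<bar> < 1" using N0L that unfolding A_def by blast
      moreover have "L ((1/e) *\<^sub>R z + (- (1/e) *\<^sub>R y)) = (L z - L y) / e"
        unfolding real_vector.linear_add[OF L(1)] real_vector.linear_scale[OF L(1)] real_vector.linear_neg[OF L(1)]
        by (simp add: diff_divide_distrib)
      ultimately have "\<bar>(L z - L y) / e\<bar> < 1" by simp
      hence "\<bar>L z - L y\<bar> / e < 1" using e(1) by simp
      hence "\<bar>L z - L y\<bar> < e" using e(1) by (simp add: divide_less_eq)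
      hence "dist (L z) (L y) < e" by (simp add: dist_real_def)
      thus ?thesis using e by blast
    qed
    ultimately show "\<exists>A. open A \<and> y \<in> A \<and> (\<forall>z\<in>UNIV. z \<in> A \<longrightarrow> L z \<in> B)" by blast
  qed
  obtain e where e: "e > 0" "\<forall>s. \<bar>s - 0\<bar> < e \<longrightarrow> s *\<^sub>R k0 \<in> U"
    using lct_ray_small[OF Z U(1), of 0 k0] U(3) by auto
  define \<epsilon> where "\<epsilon> = e / 2"
  have eps: "0 < \<epsilon>" "\<epsilon> *\<^sub>R k0 \<in> U" using e unfolding \<epsilon>_def by auto
  have Lk: "\<epsilon> \<le> L k" if k: "k \<in> K" for k
  proof -
    have "\<epsilon> *\<^sub>R k0 - k + k0 \<in> W" unfolding W_def using k eps by (auto intro!: bexI[of _ k])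
    hence "L (\<epsilon> *\<^sub>R k0 - k + k0) < 1" by (rule LW)
    hence "\<epsilon> * L k0 - L k + L k0 < 1"
      using real_vector.linear_add[OF L(1)] real_vector.linear_diff[OF L(1)] real_vector.linear_scale[OF L(1)] by simp
    moreover have "\<epsilon> \<le> \<epsilon> * L k0" using Lk0 eps by (simp add: mult_le_cancel_left1)
    ultimately show ?thesis using Lk0 by linarith
  qed
  define h where "h = (\<lambda>x. (1/\<epsilon>) * L x)"
  have "linear h" unfolding h_def
    by (rule linearI) (simp_all add: real_vector.linear_add[OF L(1)] real_vector.linear_scale[OF L(1)] algebra_simps)
  moreover have "continuous_on UNIV h" unfolding h_def by (intro continuous_intros Lcont)
  moreover have "\<forall>k\<in>K. 1 \<le> h k" unfolding h_def using Lk eps by (simp add: field_simps)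
  ultimately show ?thesis by blast
qed

lemma cone_add: "closed_convex_cone C \<Longrightarrow> a \<in> C \<Longrightarrow> b \<in> C \<Longrightarrow> a + b \<in> C"
proof -
  assume C: "closed_convex_cone C" and a: "a \<in> C" and b: "b \<in> C"
  have cv: "convex C" and cn: "cone C" using C unfolding closed_convex_cone_def by auto
  have "(1/2) *\<^sub>R a + (1/2) *\<^sub>R b \<in> C" by (rule convexD[OF cv a b]) auto
  hence "2 *\<^sub>R ((1/2) *\<^sub>R a + (1/2) *\<^sub>R b) \<in> C" using cn unfolding cone_def by auto
  thus ?thesis by (simp add: scaleR_add_right)
qed

lemma cone_scale: "closed_convex_cone C \<Longrightarrow> a \<in> C \<Longrightarrow> 0 \<le> r \<Longrightarrow> r *\<^sub>R a \<in> C"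
  unfolding closed_convex_cone_def cone_def by auto

lemma ominus_inf: "ereal_ominus \<infinity> (ereal s) = \<infinity>"
proof -
  have "{ereal t | t. \<infinity> \<le> inf_add (ereal s) (ereal t)} = {}" unfolding inf_add_def by auto
  thus ?thesis unfolding ereal_ominus_def by (simp add: top_ereal_def)
qed

lemma ominus_fin: "ereal_ominus (ereal a) (ereal s) = ereal (a - s)"
proof -
  have eq: "{ereal t | t. ereal a \<le> inf_add (ereal s) (ereal t)} = {ereal t | t. a - s \<le> t}"
    unfolding inf_add_def by auto
  show ?thesis unfolding ereal_ominus_def eq
    by (rule antisym) (auto intro!: Inf_lower Inf_greatest)
qed

lemma Sconv: "convex S \<Longrightarrow> x0 \<in> S \<Longrightarrow> x \<in> S \<Longrightarrow> 0 \<le> t \<Longrightarrow> t \<le> 1 \<Longrightarrow> x0 + t *\<^sub>R (x - x0) \<in> S"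
proof -
  assume "convex S" "x0 \<in> S" "x \<in> S" "0 \<le> t" "t \<le> 1"
  hence "(1 - t) *\<^sub>R x0 + t *\<^sub>R x \<in> S" by (intro convexD) auto
  moreover have "(1 - t) *\<^sub>R x0 + t *\<^sub>R x = x0 + t *\<^sub>R (x - x0)" by (simp add: algebra_simps)
  ultimately show ?thesis by simp
qed

lemma Cconv: "C_convex S C \<psi> \<Longrightarrow> x1 \<in> S \<Longrightarrow> x2 \<in> S \<Longrightarrow> 0 \<le> t \<Longrightarrow> t \<le> 1 \<Longrightarrow>
   \<exists>c\<in>C. (1 - t) *\<^sub>R \<psi> x1 + t *\<^sub>R \<psi> x2 = \<psi> (x1 + t *\<^sub>R (x2 - x1)) + c"
  unfolding C_convex_def by blast

lemma fC_x0: "x0 \<in> S \<Longrightarrow> 0 \<in> C \<Longrightarrow> \<psi> x0 \<in> fC S \<psi> C x0"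
  unfolding fC_def by (auto intro!: exI[of _ 0])

lemma P2:
  fixes S :: "'x::real_vector set" and \<psi> :: "'x \<Rightarrow> 'z::{real_vector,t2_space}"
  assumes C: "closed_convex_cone C" "0 \<in> C" and x0: "x0 \<in> S"
    and g: "g \<in> negdual C" and pos: "0 < phider (phiC S \<psi> g) x0 u"
  shows "0 \<notin> setder (fC S \<psi> C) x0 u"
proof -
  have gl: "linear g" and gc: "continuous_on UNIV g" and gC: "\<And>c. c \<in> C \<Longrightarrow> g c \<le> 0"
    using g unfolding negdual_def dualsp_def by auto
  obtain \<epsilon> :: real where eps: "0 < \<epsilon>" "ereal \<epsilon> < phider (phiC S \<psi> g) x0 u"
  proof (cases "phider (phiC S \<psi> g) x0 u")
    case (real r) thus ?thesis using that[of "r/2"] pos by auto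
  next
    case PInf thus ?thesis using that[of 1] by auto
  next
    case MInf thus ?thesis using pos by auto
  qed
  have trm: "ereal \<epsilon> < ereal (1 / t) * ereal_ominus (phiC S \<psi> g (x0 + t *\<^sub>R u)) (phiC S \<psi> g x0)"
    if "0 < t" for t
  proof -
    have "phider (phiC S \<psi> g) x0 u \<le> ereal (1 / t) * ereal_ominus (phiC S \<psi> g (x0 + t *\<^sub>R u)) (phiC S \<psi> g x0)"
      unfolding phider_def using that by (intro INF_lower) auto
    thus ?thesis using eps by simp
  qed
  define H where "H = {z. \<epsilon> \<le> - g z}"
  have Hc: "closed H" unfolding H_def by (intro closed_Collect_le continuous_intros gc)
  have Hv: "convex H" unfolding H_def convex_def
  proof (intro allI impI ballI, clarify)
    fix x y :: 'z and a b :: real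
    assume x: "\<epsilon> \<le> - g x" and y: "\<epsilon> \<le> - g y" and ab: "0 \<le> a" "0 \<le> b" "a + b = 1"
    have e1: "- g (a *\<^sub>R x + b *\<^sub>R y) = a * (- g x) + b * (- g y)"
      using real_vector.linear_add[OF gl] real_vector.linear_scale[OF gl] by simp
    have e2: "a * \<epsilon> \<le> a * (- g x)" "b * \<epsilon> \<le> b * (- g y)" using mult_left_mono[OF x ab(1)] mult_left_mono[OF y ab(2)] by auto
    show "\<epsilon> \<le> - g (a *\<^sub>R x + b *\<^sub>R y)" 
    proof -
      have "(a + b) * \<epsilon> = \<epsilon>" using ab(3) by simp
      hence "a * \<epsilon> + b * \<epsilon> = \<epsilon>" by (simp add: distrib_right)
      thus ?thesis using e1 e2 by linarith
    qed
  qed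
  have sub: "(\<Union>t\<in>{0<..<1}. (\<lambda>z. (1 / t) *\<^sub>R z) ` setminus_ominus (fC S \<psi> C (x0 + t *\<^sub>R u)) (fC S \<psi> C x0)) \<subseteq> H"
  proof (clarify)
    fix t w assume t: "t \<in> {0<..<1::real}" and w: "w \<in> setminus_ominus (fC S \<psi> C (x0 + t *\<^sub>R u)) (fC S \<psi> C x0)"
    have t0: "0 < t" using t by simp
    have "\<psi> x0 + w \<in> fC S \<psi> C (x0 + t *\<^sub>R u)"
      using w fC_x0[OF x0 C(2), of \<psi>] unfolding setminus_ominus_def by auto
    then obtain c where xs: "x0 + t *\<^sub>R u \<in> S" and c: "c \<in> C" and wc: "\<psi> x0 + w = \<psi> (x0 + t *\<^sub>R u) + c"
      unfolding fC_def by (auto split: if_splits)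
    have "ereal \<epsilon> < ereal (1/t) * ereal_ominus (ereal (- g (\<psi> (x0 + t *\<^sub>R u)))) (ereal (- g (\<psi> x0)))"
      using trm[OF t0] xs x0 unfolding phiC_def by simp
    hence e1: "\<epsilon> < (1/t) * (- g (\<psi> (x0 + t *\<^sub>R u)) + g (\<psi> x0))" unfolding ominus_fin by simp
    have "w = \<psi> (x0 + t *\<^sub>R u) + c - \<psi> x0" using wc by (simp add: algebra_simps)
    hence gw: "g w = g (\<psi> (x0 + t *\<^sub>R u)) + g c - g (\<psi> x0)"
      using real_vector.linear_add[OF gl] real_vector.linear_diff[OF gl] by simp
    have "- g ((1/t) *\<^sub>R w) = (1/t) * (- g w)" using real_vector.linear_scale[OF gl] by simp
    hence "- g ((1/t) *\<^sub>R w) = (1/t) * (- g (\<psi> (x0 + t *\<^sub>R u)) + g (\<psi> x0)) + (1/t) * (- g c)"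
      unfolding gw by (simp add: algebra_simps)
    moreover have "0 \<le> (1/t) * (- g c)" using gC[OF c] t0 by (simp add: divide_nonpos_pos)
    ultimately show "(1/t) *\<^sub>R w \<in> H" unfolding H_def using e1 by simp
  qed
  have "closure (convex hull (\<Union>t\<in>{0<..<1}. (\<lambda>z. (1 / t) *\<^sub>R z) ` setminus_ominus (fC S \<psi> C (x0 + t *\<^sub>R u)) (fC S \<psi> C x0))) \<subseteq> H"
    by (intro closure_minimal hull_minimal sub Hv Hc)
  moreover have "0 \<notin> H" unfolding H_def using eps real_vector.linear_0[OF gl] by simp
  ultimately show ?thesis unfolding setder_def by auto
qed

lemma P1:
  fixes S :: "'x::real_vector set" and \<psi> :: "'x \<Rightarrow> 'z::{real_vector,t2_space}"
  assumes Z: "lctvs TYPE('z)" and C: "closed_convex_cone C" "0 \<in> C" and psi: "C_convex S C \<psi>"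
    and x0: "x0 \<in> S" and x: "x \<in> S"
    and nz: "0 \<notin> setder (fC S \<psi> C) x0 (x - x0)"
  shows "\<exists>g\<in>negdual C - {\<lambda>_. 0}. 0 < phider (phiC S \<psi> g) x0 (x - x0)"
proof -
  define u where "u = x - x0"
  have Sc: "convex S" using psi unfolding C_convex_def by simp
  define A where "A = (\<lambda>t0. \<Union>t\<in>{0<..<t0}. (\<lambda>z. (1 / t) *\<^sub>R z) ` setminus_ominus (fC S \<psi> C (x0 + t *\<^sub>R u)) (fC S \<psi> C x0))"
  obtain t0 :: real where t0: "0 < t0" and nA: "0 \<notin> closure (convex hull (A t0))"
    using nz unfolding setder_def A_def u_def by auto
  obtain h :: "'z \<Rightarrow> real" where hl: "linear h" and hc: "continuous_on UNIV h"
    and hA: "\<forall>k\<in>convex hull (A t0). 1 \<le> h k"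
    using separation[OF Z convex_convex_hull, of "UNIV - closure (convex hull (A t0))"] nA closure_subset
    by blast
  have mem: "1 \<le> h ((1/t) *\<^sub>R (\<psi> (x0 + t *\<^sub>R u) - \<psi> x0 + c))"
    if t: "0 < t" "t < t0" and xs: "x0 + t *\<^sub>R u \<in> S" and c: "c \<in> C" for t c
  proof -
    have "\<psi> (x0 + t *\<^sub>R u) - \<psi> x0 + c \<in> setminus_ominus (fC S \<psi> C (x0 + t *\<^sub>R u)) (fC S \<psi> C x0)"
      unfolding setminus_ominus_def
    proof (clarify)
      fix b assume "b \<in> fC S \<psi> C x0"
      then obtain c' where c': "c' \<in> C" "b = \<psi> x0 + c'" using x0 unfolding fC_def by auto
      have eq: "b + (\<psi> (x0 + t *\<^sub>R u) - \<psi> x0 + c) = \<psi> (x0 + t *\<^sub>R u) + (c + c')" using c' by simp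
      have cc: "c + c' \<in> C" by (rule cone_add[OF C(1) c c'(1)])
      have "b + (\<psi> (x0 + t *\<^sub>R u) - \<psi> x0 + c) \<in> {\<psi> (x0 + t *\<^sub>R u) + c | c. c \<in> C}"
        using eq cc by blast
      thus "b + (\<psi> (x0 + t *\<^sub>R u) - \<psi> x0 + c) \<in> fC S \<psi> C (x0 + t *\<^sub>R u)"
        unfolding fC_def using xs by simp
    qed
    hence "(1/t) *\<^sub>R (\<psi> (x0 + t *\<^sub>R u) - \<psi> x0 + c) \<in> A t0" unfolding A_def
      by (intro UN_I[of t] imageI) (use t in auto)
    hence "(1/t) *\<^sub>R (\<psi> (x0 + t *\<^sub>R u) - \<psi> x0 + c) \<in> convex hull (A t0)"
      using hull_subset[of "A t0" convex] by (rule rev_subsetD)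
    thus ?thesis using hA by (rule bspec[rotated])
  qed
  define Hf where "Hf = (\<lambda>y. h (\<psi> y))"
  have hq: "h ((1/t) *\<^sub>R (\<psi> y - \<psi> x0 + c)) = (1/t) * (Hf y - Hf x0) + (1/t) * h c" for t y c
    unfolding Hf_def real_vector.linear_scale[OF hl] real_vector.linear_add[OF hl] real_vector.linear_diff[OF hl]
    by (simp add: distrib_left)
  define t1 where "t1 = min (t0/2) 1"
  have t1: "0 < t1" "t1 < t0" "t1 \<le> 1" unfolding t1_def using t0 by auto
  have xt1: "x0 + t1 *\<^sub>R u \<in> S" unfolding u_def by (rule Sconv[OF Sc x0 x]) (use t1 in auto)
  have hC: "0 \<le> h c" if c: "c \<in> C" for c
  proof (rule ccontr)
    assume "\<not> 0 \<le> h c"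
    hence hc0: "h c < 0" by simp
    define Q where "Q = (1/t1) * (Hf (x0 + t1 *\<^sub>R u) - Hf x0)"
    define r where "r = (\<bar>Q\<bar> + 1) * t1 / (- h c)"
    have r0: "0 \<le> r" unfolding r_def using hc0 t1 by (intro divide_nonneg_pos mult_nonneg_nonneg) auto
    have "1 \<le> Q + (1/t1) * h (r *\<^sub>R c)"
      using mem[OF t1(1,2) xt1 cone_scale[OF C(1) c r0]] hq unfolding Q_def by simp
    also have "(1/t1) * h (r *\<^sub>R c) = - (\<bar>Q\<bar> + 1)"
      unfolding real_vector.linear_scale[OF hl] r_def using hc0 t1 by (simp add: field_simps)
    finally show False by linarith
  qed
  define g where "g = (\<lambda>z. - h z)"
  have gl: "linear g" unfolding g_def
    by (rule linearI) (simp_all add: real_vector.linear_add[OF hl] real_vector.linear_scale[OF hl])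
  have gc: "continuous_on UNIV g" unfolding g_def by (intro continuous_intros hc)
  have gneg: "g \<in> negdual C" unfolding negdual_def dualsp_def g_def using gl gc hC g_def by auto
  have gnz: "g \<noteq> (\<lambda>_. 0)"
  proof
    assume "g = (\<lambda>_. 0)"
    hence "h z = 0" for z using fun_cong[of g "\<lambda>_. 0" z] unfolding g_def by simp
    thus False using mem[OF t1(1,2) xt1 C(2)] by simp
  qed
  have main: "1 \<le> (1/t) * (Hf (x0 + t *\<^sub>R u) - Hf x0)" if t: "0 < t" and xs: "x0 + t *\<^sub>R u \<in> S" for t
  proof -
    define s where "s = min t t1"
    have s: "0 < s" "s \<le> t" "s < t0" using t t1 unfolding s_def by auto
    define r where "r = s / t"
    have r: "0 \<le> r" "r \<le> 1" unfolding r_def using s t by auto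
    obtain c where c: "c \<in> C" and ceq: "(1 - r) *\<^sub>R \<psi> x0 + r *\<^sub>R \<psi> (x0 + t *\<^sub>R u) = \<psi> (x0 + r *\<^sub>R ((x0 + t *\<^sub>R u) - x0)) + c"
      using Cconv[OF psi x0 xs r] by blast
    have xr: "x0 + r *\<^sub>R ((x0 + t *\<^sub>R u) - x0) = x0 + s *\<^sub>R u" unfolding r_def using t by simp
    have xs': "x0 + s *\<^sub>R u \<in> S" using Sconv[OF Sc x0 xs r] unfolding xr .
    have "h ((1 - r) *\<^sub>R \<psi> x0 + r *\<^sub>R \<psi> (x0 + t *\<^sub>R u)) = h (\<psi> (x0 + s *\<^sub>R u) + c)"
      using arg_cong[OF ceq, of h] unfolding xr .
    hence "(1 - r) * Hf x0 + r * Hf (x0 + t *\<^sub>R u) = Hf (x0 + s *\<^sub>R u) + h c"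
      unfolding Hf_def real_vector.linear_add[OF hl] real_vector.linear_scale[OF hl] by simp
    hence ineq: "Hf (x0 + s *\<^sub>R u) - Hf x0 \<le> r * (Hf (x0 + t *\<^sub>R u) - Hf x0)" using hC[OF c]
      by (simp add: algebra_simps)
    have "1 \<le> (1/s) * (Hf (x0 + s *\<^sub>R u) - Hf x0)"
      using mem[OF s(1,3) xs' C(2)] hq[of s "x0 + s *\<^sub>R u" 0] real_vector.linear_0[OF hl] by simp
    also have "\<dots> \<le> (1/s) * (r * (Hf (x0 + t *\<^sub>R u) - Hf x0))"
      using ineq s by (simp add: divide_right_mono)
    also have "\<dots> = (1/t) * (Hf (x0 + t *\<^sub>R u) - Hf x0)" unfolding r_def using s t by simp
    finally show ?thesis .
  qed
  have "1 \<le> phider (phiC S \<psi> g) x0 u"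
    unfolding phider_def
  proof (rule INF_greatest)
    fix t :: real assume "t \<in> {0<..}"
    hence t: "0 < t" by simp
    show "1 \<le> ereal (1 / t) * ereal_ominus (phiC S \<psi> g (x0 + t *\<^sub>R u)) (phiC S \<psi> g x0)"
    proof (cases "x0 + t *\<^sub>R u \<in> S")
      case False
      thus ?thesis using t x0 unfolding phiC_def by (simp add: ominus_inf)
    next
      case True
      have "phiC S \<psi> g (x0 + t *\<^sub>R u) = ereal (Hf (x0 + t *\<^sub>R u))" "phiC S \<psi> g x0 = ereal (Hf x0)"
        using True x0 unfolding phiC_def g_def Hf_def by auto
      thus ?thesis using main[OF t True] by (simp add: ominus_fin)
    qed
  qed
  hence "0 < phider (phiC S \<psi> g) x0 (x - x0)" unfolding u_def
    by (rule less_le_trans[rotated]) simp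
  thus ?thesis using gneg gnz by blast
qed

lemma P3:
  fixes S :: "'x::real_vector set" and \<psi> :: "'x \<Rightarrow> 'z::{real_vector,t2_space}"
  assumes Z: "lctvs TYPE('z)" and C: "closed_convex_cone C" "0 \<in> C" and psi: "C_convex S C \<psi>"
    and x0: "x0 \<in> S"
    and hyp: "\<forall>x\<in>S. \<psi> x \<noteq> \<psi> x0 \<longrightarrow> (\<exists>z. z \<in> dini_fin \<psi> x0 (x - x0) \<and> z \<notin> uminus ` C)"
  shows "Eff_pt C (\<psi> ` S) (\<psi> x0)"
  unfolding Eff_pt_def
proof (intro conjI ballI impI)
  show "\<psi> x0 \<in> \<psi> ` S" using x0 by simp
  fix y assume "y \<in> \<psi> ` S" and yc: "\<psi> x0 \<in> {y + c |c. c \<in> C}"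
  then obtain x where x: "x \<in> S" "y = \<psi> x" by auto
  obtain c0 where c0: "c0 \<in> C" "\<psi> x0 = \<psi> x + c0" using yc x by auto
  have "\<psi> x = \<psi> x0"
  proof (rule ccontr)
    assume ne: "\<psi> x \<noteq> \<psi> x0"
    obtain z where z: "z \<in> dini_fin \<psi> x0 (x - x0)" "z \<notin> uminus ` C" using hyp x ne by blast
    obtain t :: "nat \<Rightarrow> real" where tpos: "\<And>i. 0 < t i" and tlim: "t \<longlonglongrightarrow> 0"
      and tc: "tilde_conv_fin (\<lambda>i. (1 / t i) *\<^sub>R (\<psi> (x0 + t i *\<^sub>R (x - x0)) - \<psi> x0)) z"
      using z(1) unfolding dini_fin_def by blast
    define K where "K = {w. (-1) *\<^sub>R w + (- z) \<in> C}"
    have Kc: "convex K" unfolding K_def convex_def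
    proof (intro ballI allI impI)
      fix a b :: real and v w :: 'z assume v0: "v \<in> {w. (-1) *\<^sub>R w + - z \<in> C}" and w0: "w \<in> {w. (-1) *\<^sub>R w + - z \<in> C}"
        and ab: "0 \<le> a" "0 \<le> b" "a + b = 1"
      have v: "(-1) *\<^sub>R v + - z \<in> C" and w: "(-1) *\<^sub>R w + - z \<in> C" using v0 w0 by auto
      have "a *\<^sub>R ((-1) *\<^sub>R v + - z) + b *\<^sub>R ((-1) *\<^sub>R w + - z) \<in> C"
        using C(1) v w ab unfolding closed_convex_cone_def by (intro convexD) auto
      moreover have "a *\<^sub>R ((-1) *\<^sub>R v + - z) + b *\<^sub>R ((-1) *\<^sub>R w + - z) = (-1) *\<^sub>R (a *\<^sub>R v + b *\<^sub>R w) + - z"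
      proof -
        have "a *\<^sub>R ((-1) *\<^sub>R v + - z) + b *\<^sub>R ((-1) *\<^sub>R w + - z) = (-1) *\<^sub>R (a *\<^sub>R v + b *\<^sub>R w) - (a + b) *\<^sub>R z"
          by (simp add: algebra_simps)
        thus ?thesis using ab(3) by simp
      qed
      ultimately show "a *\<^sub>R v + b *\<^sub>R w \<in> {w. (-1) *\<^sub>R w + - z \<in> C}" by simp
    qed
    have Vo: "open (UNIV - K)"
    proof -
      have "UNIV - K = {w. (-1) *\<^sub>R w + (- z) \<in> UNIV - C}" unfolding K_def by auto
      moreover have "open (UNIV - C)" using C(1) unfolding closed_convex_cone_def by (simp add: open_Diff)
      ultimately show ?thesis using lct_aff_open[OF Z, of "UNIV - C" "-1" "-z"] by simp
    qed
    have V0: "0 \<in> UNIV - K" using z(2) unfolding K_def by (auto simp: image_iff)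
    obtain h :: "'z \<Rightarrow> real" where hl: "linear h" and hc: "continuous_on UNIV h" and hK: "\<forall>k\<in>K. 1 \<le> h k"
      using separation[OF Z Kc Vo V0] by blast
    define U where "U = {w. \<bar>h w\<bar> \<le> 1/2}"
    have Ucl: "closed U" unfolding U_def by (intro closed_Collect_le continuous_intros hc)
    have Ucv: "convex U" unfolding U_def convex_def
    proof (intro ballI allI impI)
      fix a b :: real and v w :: 'z assume v0: "v \<in> {w. \<bar>h w\<bar> \<le> 1/2}" and w0: "w \<in> {w. \<bar>h w\<bar> \<le> 1/2}"
        and ab: "0 \<le> a" "0 \<le> b" "a + b = 1"
      have v: "\<bar>h v\<bar> \<le> 1/2" and w: "\<bar>h w\<bar> \<le> 1/2" using v0 w0 by auto
      have "\<bar>h (a *\<^sub>R v + b *\<^sub>R w)\<bar> = \<bar>a * h v + b * h w\<bar>"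
        using real_vector.linear_add[OF hl] real_vector.linear_scale[OF hl] by simp
      also have "\<dots> \<le> a * \<bar>h v\<bar> + b * \<bar>h w\<bar>" using ab by (simp add: abs_triangle_ineq[THEN order_trans] abs_mult)
      also have "\<dots> \<le> a * (1/2) + b * (1/2)" using ab v w by (intro add_mono mult_left_mono) auto
      also have "\<dots> = 1/2" using ab(3) by (simp add: distrib_right[symmetric])
      finally show "a *\<^sub>R v + b *\<^sub>R w \<in> {w. \<bar>h w\<bar> \<le> 1/2}" by simp
    qed
    have Ubal: "balanced_set U" unfolding balanced_set_def U_def
    proof (intro allI impI subsetI, clarify)
      fix a :: real and w assume a: "\<bar>a\<bar> \<le> 1" and w: "\<bar>h w\<bar> \<le> 1/2"
      have "\<bar>h (a *\<^sub>R w)\<bar> = \<bar>a\<bar> * \<bar>h w\<bar>" using real_vector.linear_scale[OF hl] by (simp add: abs_mult)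
      also have "\<dots> \<le> 1 * (1/2)" using a w by (intro mult_mono) auto
      finally show "\<bar>h (a *\<^sub>R w)\<bar> \<le> 1/2" by simp
    qed
    have Uint: "0 \<in> interior U"
    proof -
      have "open {w. \<bar>h w\<bar> < 1/2}" by (intro open_Collect_less continuous_intros hc)
      moreover have "{w. \<bar>h w\<bar> < 1/2} \<subseteq> U" unfolding U_def by auto
      moreover have "0 \<in> {w. \<bar>h w\<bar> < 1/2}" using real_vector.linear_0[OF hl] by simp
      ultimately show ?thesis by (meson interior_maximal subsetD)
    qed
    have ev1: "\<forall>\<^sub>F i in sequentially. (1 / t i) *\<^sub>R (\<psi> (x0 + t i *\<^sub>R (x - x0)) - \<psi> x0) \<in> (\<lambda>u. z + u) ` U"
      using tc Ucl Ucv Ubal Uint unfolding tilde_conv_fin_def by blast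
    have ev2: "\<forall>\<^sub>F i in sequentially. t i < 1" using order_tendstoD(2)[OF tlim] by simp
    have "\<forall>\<^sub>F i in sequentially. False"
      using ev1 ev2
    proof eventually_elim
      case (elim i)
      define \<tau> where "\<tau> = t i"
      have tau: "0 < \<tau>" "\<tau> \<le> 1" using tpos[of i] elim(2) unfolding \<tau>_def by auto
      obtain w where w: "w \<in> U" and qw: "(1 / \<tau>) *\<^sub>R (\<psi> (x0 + \<tau> *\<^sub>R (x - x0)) - \<psi> x0) = z + w"
        using elim(1) unfolding \<tau>_def by auto
      obtain c where c: "c \<in> C" and ceq: "(1 - \<tau>) *\<^sub>R \<psi> x0 + \<tau> *\<^sub>R \<psi> x = \<psi> (x0 + \<tau> *\<^sub>R (x - x0)) + c"
        using Cconv[OF psi x0 x(1), of \<tau>] tau by auto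
      have "\<psi> (x0 + \<tau> *\<^sub>R (x - x0)) - \<psi> x0 = - (\<tau> *\<^sub>R c0 + c)"
      proof -
        have "\<psi> (x0 + \<tau> *\<^sub>R (x - x0)) = (1 - \<tau>) *\<^sub>R \<psi> x0 + \<tau> *\<^sub>R \<psi> x - c" using ceq by (simp add: algebra_simps)
        also have "\<dots> = (1 - \<tau>) *\<^sub>R (\<psi> x + c0) + \<tau> *\<^sub>R \<psi> x - c" using c0(2) by simp
        finally show ?thesis using c0(2) by (simp add: algebra_simps)
      qed
      hence "z + w = (1 / \<tau>) *\<^sub>R (- (\<tau> *\<^sub>R c0 + c))" using qw by simp
      also have "\<dots> = - (c0 + (1/\<tau>) *\<^sub>R c)" using tau by (simp add: scaleR_add_right scaleR_diff_right)
      finally have zw: "z + w = - (c0 + (1/\<tau>) *\<^sub>R c)" .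
      moreover have "c0 + (1/\<tau>) *\<^sub>R c \<in> C"
        by (intro cone_add[OF C(1) c0(1)] cone_scale[OF C(1) c]) (use tau in simp)
      moreover have "(-1) *\<^sub>R w + - z = - (z + w)" by (simp add: algebra_simps)
      ultimately have "w \<in> K" unfolding K_def using zw by (simp add: add.commute)
      hence "1 \<le> h w" using hK by blast
      moreover have "\<bar>h w\<bar> \<le> 1/2" using w unfolding U_def by simp
      ultimately show False by simp
    qed
    thus False by (simp add: eventually_False_sequentially)
  qed
  thus "\<psi> x0 \<in> {y + c |c. c \<in> C \<inter> uminus ` C}"
    using C(2) x(2) by (auto intro!: exI[of _ 0] image_eqI[of 0 uminus 0])
qed

theorem mainTheorem16:
  fixes S :: "'x::real_vector set" and \<psi> :: "'x \<Rightarrow> 'z::{real_vector,t2_space}"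
    and C :: "'z set" and x0 :: 'x
  assumes Z: "lctvs TYPE('z)"
    and C: "closed_convex_cone C" "0 \<in> C" "negdual C - {\<lambda>_. 0} \<noteq> {}"
    and psi: "C_convex S C \<psi>" and x0: "x0 \<in> S"
  shows
   "((fC S \<psi> C x0 = UNIV \<or>
       (\<forall>x\<in>S. fC S \<psi> C x \<noteq> fC S \<psi> C x0 \<longrightarrow> 0 \<notin> setder (fC S \<psi> C) x0 (x - x0)))
     \<longleftrightarrow>
     (fC S \<psi> C x0 = UNIV \<or>
       (\<forall>x\<in>S. fC S \<psi> C x \<noteq> fC S \<psi> C x0 \<longrightarrow>
          (\<exists>g\<in>negdual C - {\<lambda>_. 0}. 0 < phider (phiC S \<psi> g) x0 (x - x0)))))
    \<and>
    ((fC S \<psi> C x0 = UNIV \<or>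
       (\<forall>x\<in>S. fC S \<psi> C x \<noteq> fC S \<psi> C x0 \<longrightarrow>
          (\<exists>g\<in>negdual C - {\<lambda>_. 0}. 0 < phider (phiC S \<psi> g) x0 (x - x0))))
     \<longleftrightarrow>
     (\<forall>x\<in>S. fC S \<psi> C x0 \<noteq> fC S \<psi> C x \<longrightarrow>
          (\<exists>g\<in>negdual C - {\<lambda>_. 0}.
             (- \<infinity> = phiC S \<psi> g x0 \<and> phiC S \<psi> g x0 < phiC S \<psi> g x) \<or>
             0 < phider (phiC S \<psi> g) x0 (x - x0))))
    \<and>
    ((\<forall>x\<in>S. \<psi> x \<noteq> \<psi> x0 \<longrightarrow> (\<exists>z. z \<in> dini_fin \<psi> x0 (x - x0) \<and> z \<notin> uminus ` C))
       \<longrightarrow> Eff_pt C (\<psi> ` S) (\<psi> x0))"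
proof -
  obtain g0 where g0: "g0 \<in> negdual C" "g0 \<noteq> (\<lambda>_. 0)" using C(3) by auto
  have CU: "C \<noteq> UNIV"
  proof
    assume CU: "C = UNIV"
    have gl: "linear g0" using g0(1) unfolding negdual_def dualsp_def by auto
    have "g0 c = 0" for c
    proof -
      have "g0 c \<le> 0" "g0 (- c) \<le> 0" using g0(1) CU unfolding negdual_def by auto
      thus ?thesis using real_vector.linear_neg[OF gl, of c] by simp
    qed
    thus False using g0(2) by auto
  qed
  have fU: "fC S \<psi> C x0 \<noteq> UNIV"
  proof
    assume fU: "fC S \<psi> C x0 = UNIV"
    have "z \<in> C" for z
    proof -
      have "\<psi> x0 + z \<in> fC S \<psi> C x0" using fU by simp
      then obtain c where "c \<in> C" "\<psi> x0 + z = \<psi> x0 + c" using x0 unfolding fC_def by auto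
      thus ?thesis by simp
    qed
    thus False using CU by auto
  qed
  have phifin: "phiC S \<psi> g x0 \<noteq> - \<infinity>" for g using x0 unfolding phiC_def by simp
  have eq: "0 \<notin> setder (fC S \<psi> C) x0 (x - x0) \<longleftrightarrow>
        (\<exists>g\<in>negdual C - {\<lambda>_. 0}. 0 < phider (phiC S \<psi> g) x0 (x - x0))" if x: "x \<in> S" for x
    using P1[OF Z C(1,2) psi x0 x] P2[OF C(1,2) x0] by blast
  have part1: "((fC S \<psi> C x0 = UNIV \<or>
       (\<forall>x\<in>S. fC S \<psi> C x \<noteq> fC S \<psi> C x0 \<longrightarrow> 0 \<notin> setder (fC S \<psi> C) x0 (x - x0)))
     \<longleftrightarrow>
     (fC S \<psi> C x0 = UNIV \<or>
       (\<forall>x\<in>S. fC S \<psi> C x \<noteq> fC S \<psi> C x0 \<longrightarrow>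
          (\<exists>g\<in>negdual C - {\<lambda>_. 0}. 0 < phider (phiC S \<psi> g) x0 (x - x0)))))"
    using eq by blast
  have part2: "((fC S \<psi> C x0 = UNIV \<or>
       (\<forall>x\<in>S. fC S \<psi> C x \<noteq> fC S \<psi> C x0 \<longrightarrow>
          (\<exists>g\<in>negdual C - {\<lambda>_. 0}. 0 < phider (phiC S \<psi> g) x0 (x - x0))))
     \<longleftrightarrow>
     (\<forall>x\<in>S. fC S \<psi> C x0 \<noteq> fC S \<psi> C x \<longrightarrow>
          (\<exists>g\<in>negdual C - {\<lambda>_. 0}.
             (- \<infinity> = phiC S \<psi> g x0 \<and> phiC S \<psi> g x0 < phiC S \<psi> g x) \<or>
             0 < phider (phiC S \<psi> g) x0 (x - x0))))"
    using fU phifin by (metis (no_types, lifting))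
  have part3: "((\<forall>x\<in>S. \<psi> x \<noteq> \<psi> x0 \<longrightarrow> (\<exists>z. z \<in> dini_fin \<psi> x0 (x - x0) \<and> z \<notin> uminus ` C))
       \<longrightarrow> Eff_pt C (\<psi> ` S) (\<psi> x0))"
    using P3[OF Z C(1,2) psi x0] by blast
  show ?thesis using part1 part2 part3 by blast
qed

end
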